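(* Let $\mu$ be a centered log-concave probability measure on $\mathbb{R}^n$ with density $f$. Let $A\subset\mathbb{R}^n$ be a convex body and let $x_A+r_AB_2^n\subseteq A$ be an inball of $A$ (a Euclidean ball of maximal radius $r_A$ contained in $A$, with center $x_A$). Then $$\mu^+(\partial A)\leq \frac{n+\ln\big(\|f|_A\|_\infty/f(x_A)\big)}{r_A}\,\mu(A),$$ where $\|f|_A\|_\infty=\sup_{x\in A}f(x)$ (the right-hand side being interpreted as $+\infty$ if $f(x_A)=0$).
   Context: A probability measure on $\mathbb{R}^n$ is log-concave (full-dimensional) if it has a density $f$ with $\ln f$ concave; centered means its barycenter is $0$. A convex body is a compact convex set with nonempty interior; $B_2^n$ is the Euclidean unit ball. $\mu^+(\partial A)=\liminf_{\epsilon\to0^+}\frac{\mu((A+\epsilon B_2^n)\setminus A)}{\epsilon}$. The inradius $r_A$ of $A$ is the supremum of $r>0$ such that $x+rB_2^n\subseteq A$ for some $x\in A$ (it is attained). *)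

theory Defs
  imports "HOL-Analysis.Analysis"
begin

text \<open>Log-concavity of a nonnegative function (ln f concave, with ln 0 = -infinity),
  written in its standard multiplicative form.\<close>
definition log_concave :: "('a::euclidean_space \<Rightarrow> real) \<Rightarrow> bool" where
  "log_concave f \<longleftrightarrow> (\<forall>x. 0 \<le> f x) \<and>
     (\<forall>x y t. 0 < t \<and> t < 1 \<longrightarrow>
        f ((1 - t) *\<^sub>R x + t *\<^sub>R y) \<ge> f x powr (1 - t) * f y powr t)"

definition centered_log_concave_density :: "('a::euclidean_space \<Rightarrow> real) \<Rightarrow> bool" where
  "centered_log_concave_density f \<longleftrightarrow>
     log_concave f \<and> f \<in> borel_measurable lborel \<and>
     integrable lborel f \<and> (\<integral>x. f x \<partial>lborel) = 1 \<and>
     integrable lborel (\<lambda>x. f x *\<^sub>R x) \<and> (\<integral>x. f x *\<^sub>R x \<partial>lborel) = 0"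

definition convex_body :: "'a::euclidean_space set \<Rightarrow> bool" where
  "convex_body A \<longleftrightarrow> compact A \<and> convex A \<and> interior A \<noteq> {}"

definition enlarge :: "'a::euclidean_space set \<Rightarrow> real \<Rightarrow> 'a set" where
  "enlarge A e = {a + b | a b. a \<in> A \<and> b \<in> cball 0 e}"

definition boundary_measure :: "'a::euclidean_space measure \<Rightarrow> 'a set \<Rightarrow> ereal" where
  "boundary_measure M A =
     Liminf (at_right (0::real)) (\<lambda>e. ereal (measure M (enlarge A e - A) / e))"

definition inradius :: "'a::euclidean_space set \<Rightarrow> real" where
  "inradius A = Sup {r. r > 0 \<and> (\<exists>x\<in>A. cball x r \<subseteq> A)}"

end

theory Submission
  imports Defs
begin

lemma pointwise_bound:
  fixes f :: "'a::euclidean_space \<Rightarrow> real"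
  assumes lc: "log_concave f" and c: "c > 1" and f0: "f xA > 0" and fy: "f y \<le> M"
  shows "f (xA + c *\<^sub>R (y - xA)) \<le> f y * (M / f xA) powr (c - 1)"
proof -
  define F where "F = f (xA + c *\<^sub>R (y - xA))"
  define s where "s = 1 / c"
  have s: "0 < s" "s < 1" using c by (auto simp: s_def)
  have nn: "\<And>x. 0 \<le> f x" using lc by (auto simp: log_concave_def)
  have eq: "(1 - s) *\<^sub>R xA + s *\<^sub>R (xA + c *\<^sub>R (y - xA)) = y"
    using c by (simp add: s_def algebra_simps)
  have ineq: "f y \<ge> f xA powr (1 - s) * F powr s"
    using lc s unfolding log_concave_def F_def by (metis eq)
  show ?thesis
  proof (cases "F = 0")
    case True
    then show ?thesis using nn[of y] fy f0 by (simp add: F_def)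
  next
    case False
    then have Fp: "F > 0" using nn by (simp add: F_def order_le_neq_trans)
    have fyp: "f y > 0" using ineq Fp f0
      by (smt (verit) mult_pos_pos powr_gt_zero)
    have "(f xA powr (1 - s) * F powr s) powr c \<le> f y powr c"
      using ineq by (intro powr_mono2) (use c in auto)
    also have "(f xA powr (1 - s) * F powr s) powr c = f xA powr (c - 1) * F"
    proof -
      have e1: "(1 - s) * c = c - 1" "s * c = 1" using c by (auto simp: s_def field_simps)
      show ?thesis using f0 Fp e1 by (simp add: powr_mult powr_powr)
    qed
    finally have "F \<le> f y powr c / f xA powr (c - 1)"
      using f0 by (simp add: field_simps)
    also have "f y powr c = f y * f y powr (c - 1)"
      using fyp by (simp add: powr_diff)
    also have "f y * f y powr (c - 1) / f xA powr (c - 1) = f y * (f y / f xA) powr (c - 1)"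
      using fyp f0 by (simp add: powr_divide)
    also have "\<dots> \<le> f y * (M / f xA) powr (c - 1)"
      using fyp f0 fy c by (intro mult_left_mono powr_mono2 divide_right_mono) auto
    finally show ?thesis by (simp add: F_def)
  qed
qed

lemma inradius_pos:
  fixes A :: "'a::euclidean_space set"
  assumes "convex_body A"
  shows "inradius A > 0"
proof -
  from assms have cA: "compact A" and iA: "interior A \<noteq> {}" by (auto simp: convex_body_def)
  then obtain x where "x \<in> interior A" by auto
  then obtain e where e: "e > 0" "ball x e \<subseteq> A" by (meson mem_interior)
  have cb: "cball x (e/2) \<subseteq> A" by (rule order.trans[OF _ e(2)]) (use e in \<open>simp add: cball_subset_ball_iff\<close>)
  have xA: "x \<in> A" using cb e by (meson centre_in_cball half_gt_zero less_imp_le subsetD)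
  obtain R where R0: "\<forall>a\<in>A. norm a \<le> R" using compact_imp_bounded[OF cA] unfolding bounded_pos by blast
  have R: "A \<subseteq> cball 0 R" using R0 by (simp add: subset_iff)
  have bdd: "bdd_above {r. r > 0 \<and> (\<exists>x\<in>A. cball x r \<subseteq> A)}"
  proof (rule bdd_aboveI[where M=R])
    fix r assume "r \<in> {r. r > 0 \<and> (\<exists>x\<in>A. cball x r \<subseteq> A)}"
    then obtain y where "r > 0" "cball y r \<subseteq> A" by blast
    then have "r > 0" "cball y r \<subseteq> cball 0 R" using R by auto
    then show "r \<le> R" unfolding cball_subset_cball_iff using zero_le_dist[of y 0] by linarith
  qed
  have "e/2 \<le> inradius A" unfolding inradius_def
    by (rule cSup_upper[OF _ bdd]) (use e cb xA in auto)
  then show ?thesis using e by linarith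
qed

lemma enlarge_subset:
  fixes A :: "'a::euclidean_space set"
  assumes cv: "convex A" and cb: "cball xA r \<subseteq> A" and r: "r > 0" and e: "e > 0"
  shows "enlarge A e \<subseteq> (\<lambda>y. xA + (1 + e/r) *\<^sub>R (y - xA)) ` A"
proof
  fix z assume "z \<in> enlarge A e"
  then obtain a b where z: "z = a + b" and a: "a \<in> A" and b: "norm b \<le> e"
    by (auto simp: enlarge_def)
  define c where "c = 1 + e/r"
  have c: "c > 1" using e r by (simp add: c_def)
  define w where "w = xA + (r/e) *\<^sub>R b"
  have "norm ((r/e) *\<^sub>R b) \<le> r" proof -
    have "norm ((r/e) *\<^sub>R b) = (r/e) * norm b" using e r by simp
    also have "\<dots> \<le> (r/e) * e" using b e r by (intro mult_left_mono) auto
    finally show ?thesis using e by simp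
  qed
  moreover have "dist xA w = norm ((r/e) *\<^sub>R b)" by (simp add: w_def dist_norm)
  ultimately have "w \<in> A" using cb by auto
  define y where "y = (1/c) *\<^sub>R a + (1 - 1/c) *\<^sub>R w"
  have "y \<in> A" unfolding y_def
    by (rule convexD[OF cv a \<open>w \<in> A\<close>]) (use c in auto)
  moreover have "xA + c *\<^sub>R (y - xA) = z"
  proof -
    have e1: "c *\<^sub>R y = a + (c - 1) *\<^sub>R w" using c by (simp add: y_def scaleR_add_right scaleR_diff_right right_diff_distrib)
    have "(c - 1) * (r / e) = 1" using e r by (simp add: c_def)
    note one = this
    have "(c - 1) *\<^sub>R w = (c - 1) *\<^sub>R xA + ((c - 1) * (r / e)) *\<^sub>R b" by (simp add: w_def scaleR_add_right)
    then have e2: "(c - 1) *\<^sub>R w = (c - 1) *\<^sub>R xA + b" unfolding one by simp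
    have "xA + c *\<^sub>R (y - xA) = xA + c *\<^sub>R y - c *\<^sub>R xA" by (simp add: scaleR_diff_right)
    also have "\<dots> = xA + a + ((c - 1) *\<^sub>R xA + b) - c *\<^sub>R xA" by (simp add: e1 e2)
    also have "\<dots> = a + b" by (simp add: scaleR_diff_left)
    finally show ?thesis by (simp add: z)
  qed
  ultimately show "z \<in> (\<lambda>y. xA + (1 + e/r) *\<^sub>R (y - xA)) ` A" by (auto simp: c_def)
qed

lemma lc_bounded:
  fixes f :: "'a::euclidean_space \<Rightarrow> real"
  assumes "centered_log_concave_density f"
  shows "\<exists>B. \<forall>x. f x \<le> B"
proof -
  have lc: "log_concave f" and fm[measurable]: "f \<in> borel_measurable lborel"
    and fi: "integrable lborel f" and f1: "(\<integral>x. f x \<partial>lborel) = 1"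
    using assms by (auto simp: centered_log_concave_density_def)
  have nn: "\<And>x. 0 \<le> f x" using lc by (auto simp: log_concave_def)
  have lc': "\<And>x y t. 0 < t \<Longrightarrow> t < 1 \<Longrightarrow> f ((1 - t) *\<^sub>R x + t *\<^sub>R y) \<ge> f x powr (1 - t) * f y powr t"
    using lc unfolding log_concave_def by blast
  define S where "S k = {x. 1 / real (Suc k) \<le> f x}" for k
  have Ssets[measurable]: "S k \<in> sets lborel" for k unfolding S_def by measurable
  have "\<exists>k. S k \<notin> null_sets lborel"
  proof (rule ccontr)
    assume "\<not> ?thesis"
    then have "(\<Union>k. S k) \<in> null_sets lborel" by auto
    moreover have "{x \<in> space lborel. \<not> f x = 0} \<subseteq> (\<Union>k. S k)"
    proof
      fix x assume "x \<in> {x \<in> space lborel. \<not> f x = 0}"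
      then have "f x > 0" using nn[of x] by auto
      then obtain k where "inverse (real (Suc k)) < f x" using reals_Archimedean by blast
      then have "x \<in> S k" by (simp add: S_def inverse_eq_divide)
      then show "x \<in> (\<Union>k. S k)" by blast
    qed
    ultimately have "AE x in lborel. f x = 0" by (rule AE_I')
    then have "(\<integral>x. f x \<partial>lborel) = 0" by (rule integral_eq_zero_AE)
    then show False using f1 by simp
  qed
  then obtain k where k: "S k \<notin> null_sets lborel" by blast
  define \<delta> where "\<delta> = 1 / real (Suc k)"
  have \<delta>: "\<delta> > 0" by (simp add: \<delta>_def)
  have cS: "convex (S k)"
  proof (rule convexI)
    fix x y and u v :: real assume xy: "x \<in> S k" "y \<in> S k" and uv: "0 \<le> u" "0 \<le> v" "u + v = 1"
    show "u *\<^sub>R x + v *\<^sub>R y \<in> S k"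
    proof (cases "v = 0 \<or> v = 1")
      case True then show ?thesis using xy uv by auto
    next
      case False
      then have v: "0 < v" "v < 1" using uv by auto
      have "f ((1 - v) *\<^sub>R x + v *\<^sub>R y) \<ge> f x powr (1 - v) * f y powr v"
        using lc v unfolding log_concave_def by blast
      moreover have "f x powr (1 - v) * f y powr v \<ge> \<delta> powr (1 - v) * \<delta> powr v"
        using xy \<delta> v by (intro mult_mono powr_mono2) (auto simp: S_def \<delta>_def)
      moreover have "\<delta> powr (1 - v) * \<delta> powr v = \<delta>" using \<delta> by (simp add: powr_add[symmetric])
      moreover have "u = 1 - v" using uv by simp
      ultimately show ?thesis by (auto simp: S_def \<delta>_def)
    qed
  qed
  have "\<not> negligible (S k)"
    using k by (simp add: negligible_iff_null_sets null_sets_completion_iff[OF Ssets])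
  then have "interior (S k) \<noteq> {}" using negligible_convex_interior[OF cS] by simp
  then obtain c where "c \<in> interior (S k)" by auto
  then obtain \<rho> where \<rho>: "\<rho> > 0" "ball c \<rho> \<subseteq> S k" by (meson mem_interior)
  define V where "V = measure lborel (ball (0::'a) (\<rho>/2))"
  have V: "V > 0" unfolding V_def using \<rho> by (intro content_ball_pos) simp
  have bnd: "f z \<le> (1 / (\<delta> powr (1/2) * V)) powr 2" for z
  proof -
    define v where "v = \<delta> powr (1/2) * f z powr (1/2)"
    define B where "B = ball ((1/2) *\<^sub>R (c + z)) (\<rho>/2)"
    have Bs[measurable]: "B \<in> sets lborel" by (simp add: B_def)
    have BV: "measure lborel B = V"
      using content_ball_conv_unit_ball[of "\<rho>/2" "(1/2) *\<^sub>R (c + z)"]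
        content_ball_conv_unit_ball[of "\<rho>/2" "0::'a"] \<rho> unfolding B_def V_def by argo
    have pt: "v * indicator B w \<le> f w" for w
    proof (cases "w \<in> B")
      case False then show ?thesis using nn[of w] by simp
    next
      case True
      define b where "b = 2 *\<^sub>R w - z"
      have wb: "w = (1 - 1/2) *\<^sub>R b + (1/2) *\<^sub>R z" by (simp add: b_def scaleR_diff_right)
      have "dist c b = 2 * dist ((1/2) *\<^sub>R (c + z)) w"
      proof -
        have "c - b = 2 *\<^sub>R ((1/2) *\<^sub>R (c + z) - w)" by (simp add: b_def scaleR_diff_right scaleR_add_right)
        then show ?thesis by (simp add: dist_norm)
      qed
      then have "b \<in> S k" using True \<rho> by (auto simp: B_def)
      then have fb: "f b \<ge> \<delta>" by (simp add: S_def \<delta>_def)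
      have "f w \<ge> f b powr (1 - 1/2) * f z powr (1/2)"
        by (subst wb) (rule lc'; simp)
      moreover have "f b powr (1 - 1/2) \<ge> \<delta> powr (1/2)" using fb \<delta> by (simp add: powr_mono2)
      ultimately have "f w \<ge> v" unfolding v_def
        using mult_right_mono[OF _ powr_ge_zero] order_trans by metis
      then show ?thesis using True by simp
    qed
    have "v * V = (\<integral>w. v * indicator B w \<partial>lborel)"
      using BV by simp
    also have "\<dots> \<le> (\<integral>w. f w \<partial>lborel)"
      by (intro integral_mono fi pt integrable_mult_right integrable_real_indicator Bs)
         (use emeasure_lborel_ball_finite in \<open>auto simp: B_def\<close>)
    finally have "v * V \<le> 1" using f1 by simp
    then have "f z powr (1/2) \<le> 1 / (\<delta> powr (1/2) * V)"
      using V \<delta> by (simp add: v_def field_simps)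
    then have "(f z powr (1/2)) powr 2 \<le> (1 / (\<delta> powr (1/2) * V)) powr 2"
      by (intro powr_mono2) auto
    then show ?thesis using nn[of z] by (simp add: powr_powr)
  qed
  then show ?thesis by blast
qed

lemma emeasure_scaled:
  fixes f :: "'a::euclidean_space \<Rightarrow> real"
  assumes lc: "log_concave f" and fm[measurable]: "f \<in> borel_measurable lborel"
    and c: "c > 1" and f0: "f xA > 0" and fM: "\<And>y. y \<in> A \<Longrightarrow> f y \<le> M"
    and cA: "compact A"
  shows "emeasure (density lborel f) ((\<lambda>y. xA + c *\<^sub>R (y - xA)) ` A)
     \<le> ennreal (c ^ DIM('a) * (M / f xA) powr (c - 1)) * emeasure (density lborel f) A"
proof -
  define t where "t = xA - c *\<^sub>R xA"
  define T where "T = (\<lambda>y. t + c *\<^sub>R y)"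
  have Teq: "(\<lambda>y. xA + c *\<^sub>R (y - xA)) = T"
    by (rule ext) (simp add: T_def t_def scaleR_diff_right)
  define k where "k = (M / f xA) powr (c - 1)"
  have k: "k \<ge> 0" by (simp add: k_def)
  have Tinj: "inj T" unfolding T_def inj_def using c by auto
  have cTA: "compact (T ` A)" unfolding T_def
    by (intro compact_continuous_image cA continuous_intros)
  have TAs[measurable]: "T ` A \<in> sets borel" using cTA by (simp add: borel_compact)
  have As[measurable]: "A \<in> sets borel" using cA by (simp add: borel_compact)
  have nn: "\<And>x. 0 \<le> f x" using lc by (auto simp: log_concave_def)
  have "emeasure (density lborel f) (T ` A) = (\<integral>\<^sup>+x. ennreal (f x) * indicator (T ` A) x \<partial>lborel)"
    by (subst emeasure_density) auto
  also have "\<dots> = (\<integral>\<^sup>+x. ennreal (f x) * indicator (T ` A) x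
      \<partial>density (distr lborel borel T) (\<lambda>_. ennreal (\<bar>c\<bar> ^ DIM('a))))"
    unfolding T_def using c by (subst lborel_affine[of c t]) auto
  also have "\<dots> = (\<integral>\<^sup>+y. ennreal (\<bar>c\<bar> ^ DIM('a)) * (ennreal (f (T y)) * indicator (T ` A) (T y)) \<partial>lborel)"
  proof -
    have Tm[measurable]: "T \<in> borel_measurable borel" unfolding T_def by measurable
    have fb[measurable]: "f \<in> borel_measurable borel" using fm by simp
    show ?thesis
      by (subst nn_integral_density) (simp_all add: nn_integral_distr)
  qed
  also have "\<dots> = (\<integral>\<^sup>+y. ennreal (\<bar>c\<bar> ^ DIM('a)) * (ennreal (f (T y)) * indicator A y) \<partial>lborel)"
    using Tinj by (simp add: indicator_def inj_image_mem_iff)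
  also have "\<dots> \<le> (\<integral>\<^sup>+y. ennreal (c ^ DIM('a) * k) * (ennreal (f y) * indicator A y) \<partial>lborel)"
  proof (intro nn_integral_mono)
    fix y
    show "ennreal (\<bar>c\<bar> ^ DIM('a)) * (ennreal (f (T y)) * indicator A y)
        \<le> ennreal (c ^ DIM('a) * k) * (ennreal (f y) * indicator A y)"
    proof (cases "y \<in> A")
      case False then show ?thesis by simp
    next
      case True
      have "f (T y) \<le> f y * k"
        using pointwise_bound[OF lc c f0 fM[OF True]] by (simp add: Teq[symmetric] k_def)
      then have "c ^ DIM('a) * f (T y) \<le> c ^ DIM('a) * k * f y"
        using c by (simp add: mult_left_mono mult.commute mult.left_commute)
      then show ?thesis using True c k nn[of y] nn[of "T y"]
        by (simp add: ennreal_mult[symmetric] ennreal_le_iff)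
    qed
  qed
  also have "\<dots> = ennreal (c ^ DIM('a) * k) * emeasure (density lborel f) A"
    by (subst nn_integral_cmult) (auto simp: emeasure_density)
  finally have *: "emeasure (density lborel f) (T ` A) \<le> ennreal (c ^ DIM('a) * k) * emeasure (density lborel f) A" .
  show ?thesis unfolding Teq using * by (simp add: k_def)
qed

lemma deriv_limit:
  fixes r K :: real and n :: nat
  assumes r: "r > 0" and K: "K > 0"
  shows "((\<lambda>e. ((1 + e/r) ^ n * exp (e/r * ln K) - 1) / e) \<longlongrightarrow> (real n + ln K) / r) (at_right 0)"
proof -
  define phi where "phi e = (1 + e/r) ^ n * exp (e/r * ln K)" for e :: real
  have "(phi has_real_derivative (real n + ln K) / r) (at 0)"
    unfolding phi_def
    apply (auto intro!: derivative_eq_intros)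
    using r by (auto simp: add_divide_distrib)
  then have "(phi has_real_derivative (real n + ln K) / r) (at 0 within {0<..})"
    by (rule has_field_derivative_at_within)
  then have "((\<lambda>y. (phi y - phi 0) / (y - 0)) \<longlongrightarrow> (real n + ln K) / r) (at_right 0)"
    unfolding has_field_derivative_iff by simp
  then show ?thesis by (simp add: phi_def)
qed

theorem lemma4p4:
  fixes f :: "'a::euclidean_space \<Rightarrow> real" and A :: "'a set" and xA :: 'a
  assumes "centered_log_concave_density f"
    and "convex_body A"
    and "xA \<in> A" and "cball xA (inradius A) \<subseteq> A"
  shows "boundary_measure (density lborel f) A \<le>
     (if f xA = 0 then \<infinity>
      else ereal ((real DIM('a) + ln (Sup (f ` A) / f xA)) / inradius A
                  * measure (density lborel f) A))"
proof (cases "f xA = 0")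
  case True then show ?thesis by simp
next
  case False
  have lc: "log_concave f" and fm[measurable]: "f \<in> borel_measurable lborel"
    and fi: "integrable lborel f" and f1: "(\<integral>x. f x \<partial>lborel) = 1"
    using assms(1) by (auto simp: centered_log_concave_density_def)
  have nn: "\<And>x. 0 \<le> f x" using lc by (auto simp: log_concave_def)
  have f0: "f xA > 0" using False nn[of xA] by simp
  have cA: "compact A" and cvA: "convex A" using assms(2) by (auto simp: convex_body_def)
  define r where "r = inradius A"
  have r: "r > 0" using inradius_pos[OF assms(2)] by (simp add: r_def)
  have cb: "cball xA r \<subseteq> A" using assms(4) by (simp add: r_def)
  obtain Bd where Bd: "\<And>x. f x \<le> Bd" using lc_bounded[OF assms(1)] by blast
  have bdd: "bdd_above (f ` A)" by (rule bdd_aboveI[where M=Bd]) (use Bd in auto)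
  define M where "M = Sup (f ` A)"
  have fM: "\<And>y. y \<in> A \<Longrightarrow> f y \<le> M" unfolding M_def using bdd by (auto intro: cSup_upper)
  have M0: "M \<ge> f xA" using fM[OF assms(3)] .
  define K where "K = M / f xA"
  have K: "K > 0" using M0 f0 by (simp add: K_def)
  define \<mu> where "\<mu> = density lborel f"
  have sets_mu[simp]: "sets \<mu> = sets borel" by (simp add: \<mu>_def)
  have As[measurable]: "A \<in> sets borel" using cA by (simp add: borel_compact)
  have "emeasure \<mu> (space \<mu>) = (\<integral>\<^sup>+x. ennreal (f x) \<partial>lborel)"
    by (simp add: \<mu>_def emeasure_density)
  also have "\<dots> = ennreal 1"
    using f1 fi nn by (subst nn_integral_eq_integral) auto
  finally have "emeasure \<mu> (space \<mu>) \<noteq> \<infinity>" by simp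
  then interpret mu: finite_measure \<mu> by (rule finite_measureI)
  define mA where "mA = measure \<mu> A"
  define phi where "phi e = (1 + e/r) ^ DIM('a) * exp (e/r * ln K)" for e
  have key: "measure \<mu> (enlarge A e - A) / e \<le> mA * ((phi e - 1) / e)" if e: "e > 0" for e
  proof -
    define c where "c = 1 + e/r"
    have c: "c > 1" using e r by (simp add: c_def)
    define T where "T = (\<lambda>y. xA + c *\<^sub>R (y - xA))"
    have sub: "enlarge A e \<subseteq> T ` A" unfolding T_def c_def by (rule enlarge_subset[OF cvA cb r e])
    have Asub: "A \<subseteq> enlarge A e" unfolding enlarge_def using e by force
    have cTA: "compact (T ` A)" unfolding T_def
      by (intro compact_continuous_image cA continuous_intros)
    have TAs[measurable]: "T ` A \<in> sets borel" using cTA by (simp add: borel_compact)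
    have cE: "compact (enlarge A e)" unfolding enlarge_def
      by (intro compact_sums cA compact_cball)
    have Es[measurable]: "enlarge A e \<in> sets borel" using cE by (simp add: borel_compact)
    have "measure \<mu> (enlarge A e - A) \<le> measure \<mu> (T ` A - A)"
      using sub by (intro mu.finite_measure_mono) auto
    also have "\<dots> = measure \<mu> (T ` A) - mA"
      unfolding mA_def using sub Asub by (intro mu.finite_measure_Diff) auto
    also have "measure \<mu> (T ` A) \<le> c ^ DIM('a) * K powr (c - 1) * mA"
    proof -
      have "emeasure \<mu> (T ` A) \<le> ennreal (c ^ DIM('a) * K powr (c - 1)) * emeasure \<mu> A"
        unfolding \<mu>_def T_def K_def by (rule emeasure_scaled[OF lc fm c f0 fM cA])
      then have "ennreal (measure \<mu> (T ` A)) \<le> ennreal (c ^ DIM('a) * K powr (c - 1) * mA)"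
        using c by (simp add: mu.emeasure_eq_measure mA_def ennreal_mult[symmetric])
      then show ?thesis using c by (simp add: ennreal_le_iff mA_def)
    qed
    also have "K powr (c - 1) = exp (e/r * ln K)" using K by (simp add: powr_def c_def)
    finally have "measure \<mu> (enlarge A e - A) \<le> mA * (phi e - 1)"
      by (simp add: phi_def c_def algebra_simps)
    then show ?thesis using e by (simp add: divide_right_mono)
  qed
  have "boundary_measure \<mu> A \<le> Liminf (at_right 0) (\<lambda>e. ereal (mA * ((phi e - 1) / e)))"
    unfolding boundary_measure_def
    by (intro Liminf_mono eventually_at_rightI[where b=1]) (use key in auto)
  also have "\<dots> = ereal (mA * ((real DIM('a) + ln K) / r))"
  proof (rule lim_imp_Liminf)
    show "\<not> trivial_limit (at_right (0::real))" by simp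
    have "((\<lambda>e. (phi e - 1) / e) \<longlongrightarrow> (real DIM('a) + ln K) / r) (at_right 0)"
      unfolding phi_def by (rule deriv_limit[OF r K])
    then show "((\<lambda>e. ereal (mA * ((phi e - 1) / e))) \<longlongrightarrow> ereal (mA * ((real DIM('a) + ln K) / r))) (at_right 0)"
      by (intro lim_ereal[THEN iffD2] tendsto_mult_left)
  qed
  finally show ?thesis using False
    by (simp add: \<mu>_def mA_def K_def M_def r_def mult.commute)
qed

end
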